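(* Let $p$ be an odd prime and $1\le\ell\le p-1$ with Legendre symbol $\left(\frac{8\ell+1}{p}\right)=-1$. Then for all $n\ge0$, $$b\big(4(pn+\ell)\big)\equiv 0\pmod 8.$$ Furthermore, for every odd prime $p$ and all $n,k\ge0$, $$b(4n)\equiv b\!\left(4p^{2k+2}n+\frac{p^{2k+2}-1}{2}\right)\pmod 8.$$
   Context: The mock theta function $\mathcal{B}(q)=\sum_{n\ge0}\frac{q^n(-q;q^2)_n}{(q;q^2)_{n+1}}=\sum_{n\ge0}b(n)q^n$, where $(a;q)_n=\prod_{j=0}^{n-1}(1-aq^j)$. *)

theory Defs
  imports "HOL-Computational_Algebra.Formal_Power_Series" "HOL-Number_Theory.Number_Theory"
begin

definition qpoch :: "int fps \<Rightarrow> int fps \<Rightarrow> nat \<Rightarrow> int fps" where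
  "qpoch a q n = (\<Prod>j<n. 1 - a * q ^ j)"

text \<open>n-th summand q^n (-q;q^2)_n / (q;q^2)_(n+1); the denominator has constant
  coefficient 1, so its inverse in int fps is the right inverse with constant term 1.\<close>
definition Bterm :: "nat \<Rightarrow> int fps" where
  "Bterm n = fps_X ^ n * qpoch (- fps_X) (fps_X ^ 2) n
             * fps_right_inverse (qpoch fps_X (fps_X ^ 2) (Suc n)) 1"

text \<open>b(m) = coefficient of q^m in B(q); summands with n > m have order > m.\<close>
definition b :: "nat \<Rightarrow> int" where
  "b m = (\<Sum>n\<le>m. fps_nth (Bterm n) m)"

end

theory Submission
  imports Defs
begin

unbundle fps_syntax


abbreviation X :: "int fps" where "X \<equiv> fps_X"

definition eqm :: "nat \<Rightarrow> int fps \<Rightarrow> int fps \<Rightarrow> bool" where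
  "eqm M f g \<longleftrightarrow> (\<forall>k<M. f $ k = g $ k)"

lemma eqm_refl[simp]: "eqm M f f" by (simp add: eqm_def)
lemma eqm_sym: "eqm M f g \<Longrightarrow> eqm M g f" by (simp add: eqm_def)
lemma eqm_trans: "eqm M f g \<Longrightarrow> eqm M g h \<Longrightarrow> eqm M f h" by (simp add: eqm_def)
declare eqm_trans[trans]
lemma eqm_mono: "eqm M f g \<Longrightarrow> M' \<le> M \<Longrightarrow> eqm M' f g" by (simp add: eqm_def)
lemma eqm_add: "eqm M f f' \<Longrightarrow> eqm M g g' \<Longrightarrow> eqm M (f + g) (f' + g')"
  by (simp add: eqm_def)
lemma eqm_diff: "eqm M f f' \<Longrightarrow> eqm M g g' \<Longrightarrow> eqm M (f - g) (f' - g')"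
  by (simp add: eqm_def)
lemma eqm_uminus: "eqm M f f' \<Longrightarrow> eqm M (- f) (- f')"
  by (simp add: eqm_def)
lemma eqm_mult: "eqm M f f' \<Longrightarrow> eqm M g g' \<Longrightarrow> eqm M (f * g) (f' * g')"
  unfolding eqm_def fps_mult_nth by (auto intro!: sum.cong)
lemma eqm_multL: "eqm M g g' \<Longrightarrow> eqm M (f * g) (f * g')"
  by (rule eqm_mult) auto
lemma eqm_multR: "eqm M f f' \<Longrightarrow> eqm M (f * g) (f' * g)"
  by (rule eqm_mult) auto
lemma eqm_power: "eqm M f g \<Longrightarrow> eqm M (f ^ n) (g ^ n)"
  by (induction n) (auto intro: eqm_mult)
lemma eqm_prod: "(\<And>i. i \<in> S \<Longrightarrow> eqm M (f i) (g i)) \<Longrightarrow> eqm M (prod f S) (prod g S)"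
proof (induction S rule: infinite_finite_induct)
  case (insert x F)
  then show ?case by (auto intro: eqm_mult)
qed auto
lemma eqm_sum: "(\<And>i. i \<in> S \<Longrightarrow> eqm M (f i) (g i)) \<Longrightarrow> eqm M (sum f S) (sum g S)"
  by (simp add: eqm_def fps_sum_nth)

lemma eqm_Xpow0: "M \<le> n \<Longrightarrow> eqm M (X ^ n * f) 0"
  by (simp add: eqm_def fps_X_power_mult_nth)
lemma eqm_Xpow0': "M \<le> n \<Longrightarrow> eqm M (f * X ^ n) 0"
  using eqm_Xpow0[of M n f] by (simp add: mult.commute)

lemma eqm_iff_diff: "eqm M f g \<longleftrightarrow> eqm M (f - g) 0"
  by (simp add: eqm_def)

lemma eqm_add0: "eqm M e 0 \<Longrightarrow> eqm M (f + e) f"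
  by (simp add: eqm_def)

definition rinv :: "int fps \<Rightarrow> int fps" where "rinv f = fps_right_inverse f 1"

lemma rinv_right: "f $ 0 = 1 \<Longrightarrow> f * rinv f = 1"
  unfolding rinv_def by (rule fps_right_inverse) simp
lemma rinv_left: "f $ 0 = 1 \<Longrightarrow> rinv f * f = 1"
  using rinv_right by (simp add: mult.commute)
lemma rinv_unique: "f $ 0 = 1 \<Longrightarrow> f * g = 1 \<Longrightarrow> rinv f = g"
proof -
  assume f0: "f $ 0 = 1" and h: "f * g = 1"
  have "rinv f = rinv f * (f * g)" using h by simp
  also have "\<dots> = (f * rinv f) * g" by (simp add: ac_simps)
  also have "\<dots> = g" using rinv_right[OF f0] by simp
  finally show ?thesis .
qed

lemma rinv_0: "f $ 0 = 1 \<Longrightarrow> rinv f $ 0 = 1"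
  using arg_cong[OF rinv_right, of f "\<lambda>h. h $ 0"] by simp

lemma rinv_mult: "f $ 0 = 1 \<Longrightarrow> g $ 0 = 1 \<Longrightarrow> rinv (f * g) = rinv f * rinv g"
  apply (rule rinv_unique)
   apply simp
  apply (simp add: rinv_right ac_simps)
  done

lemma rinv_1[simp]: "rinv 1 = 1"
  by (rule rinv_unique) auto

lemma eqm_rinv: assumes "eqm M f g" "f $ 0 = 1" "g $ 0 = 1"
  shows "eqm M (rinv f) (rinv g)"
proof -
  have "rinv f * (g - f) * rinv g = rinv f * (g * rinv g) - (rinv f * f) * rinv g"
    by (simp add: algebra_simps)
  hence "rinv f - rinv g = rinv f * (g - f) * rinv g"
    by (simp add: rinv_right[OF assms(3)] rinv_left[OF assms(2)])
  moreover have "eqm M (rinv f * (g - f) * rinv g) (rinv f * 0 * rinv g)"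
    by (intro eqm_mult eqm_refl) (use assms(1) in \<open>simp add: eqm_def\<close>)
  ultimately show ?thesis by (simp add: eqm_iff_diff[of M "rinv f"])
qed

lemma eqm_cancel: assumes "eqm M (f * u) (g * u)" "u $ 0 = 1" shows "eqm M f g"
proof -
  have "eqm M (f * u * rinv u) (g * u * rinv u)" by (rule eqm_multR[OF assms(1)])
  thus ?thesis by (simp add: mult.assoc rinv_right[OF assms(2)])
qed



definition ev :: "int fps \<Rightarrow> int fps" where
  "ev f = Abs_fps (\<lambda>k. if even k then f $ k else 0)"
definition is_ev :: "int fps \<Rightarrow> bool" where
  "is_ev f \<longleftrightarrow> (\<forall>k. odd k \<longrightarrow> f $ k = 0)"
definition sg :: "int fps \<Rightarrow> int fps" where
  "sg f = Abs_fps (\<lambda>k. (-1) ^ (k div 2) * f $ k)"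

lemma ev_nth[simp]: "ev f $ k = (if even k then f $ k else 0)" by (simp add: ev_def)
lemma sg_nth[simp]: "sg f $ k = (-1) ^ (k div 2) * f $ k" by (simp add: sg_def)

lemma ev_add: "ev (f + g) = ev f + ev g" by (rule fps_ext) simp
lemma ev_diff: "ev (f - g) = ev f - ev g" by (rule fps_ext) simp
lemma ev_uminus: "ev (- f) = - ev f" by (rule fps_ext) simp
lemma sg_add: "sg (f + g) = sg f + sg g" by (rule fps_ext) (simp add: algebra_simps)
lemma sg_diff: "sg (f - g) = sg f - sg g" by (rule fps_ext) (simp add: algebra_simps)

lemma is_ev_ev[simp]: "is_ev (ev f)" by (simp add: is_ev_def)
lemma ev_is_ev: "is_ev f \<Longrightarrow> ev f = f"
  by (rule fps_ext) (auto simp: is_ev_def)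
lemma is_ev_1[simp]: "is_ev 1" by (simp add: is_ev_def)
lemma is_ev_0[simp]: "is_ev 0" by (simp add: is_ev_def)
lemma is_ev_Xpow: "even n \<Longrightarrow> is_ev (X ^ n)" by (auto simp: is_ev_def)
lemma is_ev_add: "is_ev f \<Longrightarrow> is_ev g \<Longrightarrow> is_ev (f + g)" by (simp add: is_ev_def)
lemma is_ev_diff: "is_ev f \<Longrightarrow> is_ev g \<Longrightarrow> is_ev (f - g)" by (simp add: is_ev_def)
lemma is_ev_uminus: "is_ev f \<Longrightarrow> is_ev (- f)" by (simp add: is_ev_def)

lemma is_ev_mult: assumes "is_ev f" "is_ev g" shows "is_ev (f * g)"
  unfolding is_ev_def
proof (intro allI impI)
  fix k :: nat assume k: "odd k"
  have "(f * g) $ k = (\<Sum>i=0..k. f $ i * g $ (k - i))" by (rule fps_mult_nth)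
  also have "\<dots> = 0"
  proof (rule sum.neutral, intro ballI)
    fix i assume "i \<in> {0..k}"
    hence "odd i \<or> odd (k - i)" using k by auto
    thus "f $ i * g $ (k - i) = 0"
    proof
      assume "odd i" thus ?thesis using assms(1) by (simp add: is_ev_def)
    next
      assume "odd (k - i)" thus ?thesis using assms(2) by (simp add: is_ev_def)
    qed
  qed
  finally show "(f * g) $ k = 0" .
qed

lemma is_ev_prod: "(\<And>i. i \<in> S \<Longrightarrow> is_ev (f i)) \<Longrightarrow> is_ev (prod f S)"
proof (induction S rule: infinite_finite_induct)
  case (insert x F) then show ?case by (auto intro: is_ev_mult)
qed auto
lemma is_ev_power: "is_ev f \<Longrightarrow> is_ev (f ^ n)"
  by (induction n) (auto intro: is_ev_mult)

lemma ev_mult_ev: assumes c: "is_ev c" shows "ev (c * f) = c * ev f"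
proof (rule fps_ext)
  fix k :: nat
  have "(c * ev f) $ k = (\<Sum>i=0..k. c $ i * (ev f) $ (k - i))" by (rule fps_mult_nth)
  also have "\<dots> = (\<Sum>i=0..k. if even k then c $ i * f $ (k - i) else 0)"
  proof (rule sum.cong, simp)
    fix i assume i: "i \<in> {0..k}"
    show "c $ i * (ev f) $ (k - i) = (if even k then c $ i * f $ (k - i) else 0)"
    proof (cases "even i")
      case True thus ?thesis using i by auto
    next
      case False thus ?thesis using c by (auto simp: is_ev_def)
    qed
  qed
  also have "\<dots> = ev (c * f) $ k" by (simp add: fps_mult_nth)
  finally show "ev (c * f) $ k = (c * ev f) $ k" by simp
qed

lemma ev_odd_Xpow: "odd n \<Longrightarrow> ev (X ^ n) = 0"
  by (rule fps_ext) auto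

lemma eqm_ev: "eqm M f g \<Longrightarrow> eqm M (ev f) (ev g)" by (simp add: eqm_def)
lemma eqm_sg: "eqm M f g \<Longrightarrow> eqm M (sg f) (sg g)" by (simp add: eqm_def)

lemma sg_mult: assumes f: "is_ev f" shows "sg (f * g) = sg f * sg g"
proof (rule fps_ext)
  fix k :: nat
  have "(sg f * sg g) $ k = (\<Sum>i=0..k. (sg f) $ i * (sg g) $ (k - i))" by (rule fps_mult_nth)
  also have "\<dots> = (\<Sum>i=0..k. (-1) ^ (k div 2) * (f $ i * g $ (k - i)))"
  proof (rule sum.cong, simp)
    fix i assume i: "i \<in> {0..k}"
    show "(sg f) $ i * (sg g) $ (k - i) = (-1) ^ (k div 2) * (f $ i * g $ (k - i))"
    proof (cases "even i")
      case True
      then obtain j where j: "i = 2 * j" by blast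
      have "k div 2 = j + (k - i) div 2" using i j by auto
      hence "(-1::int) ^ (k div 2) = (-1) ^ (i div 2) * (-1) ^ ((k - i) div 2)"
        using j by (simp add: power_add)
      thus ?thesis by simp
    next
      case False thus ?thesis using f by (auto simp: is_ev_def)
    qed
  qed
  also have "\<dots> = sg (f * g) $ k" by (simp add: fps_mult_nth sum_distrib_left)
  finally show "sg (f * g) $ k = (sg f * sg g) $ k" by simp
qed

lemma sg_1[simp]: "sg 1 = 1" by (rule fps_ext) simp
lemma is_ev_sg: "is_ev f \<Longrightarrow> is_ev (sg f)" by (simp add: is_ev_def)

lemma sg_prod: "(\<And>i. i \<in> S \<Longrightarrow> is_ev (f i)) \<Longrightarrow> sg (prod f S) = (\<Prod>i\<in>S. sg (f i))"
proof (induction S rule: infinite_finite_induct)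
  case (insert x F)
  then show ?case by (simp add: sg_mult)
qed auto

lemma sg_power: "is_ev f \<Longrightarrow> sg (f ^ n) = sg f ^ n"
  by (induction n) (simp_all add: sg_mult is_ev_power)

lemma sg_Xpow_4: "sg (X ^ (4 * k)) = X ^ (4 * k)"
  by (rule fps_ext) auto
lemma sg_Xpow_4_2: "sg (X ^ (4 * k + 2)) = - (X ^ (4 * k + 2))"
proof (rule fps_ext)
  fix n show "sg (X ^ (4 * k + 2)) $ n = (- (X ^ (4 * k + 2))) $ n"
  proof (cases "n = 4 * k + 2")
    case True
    hence "n div 2 = 2 * k + 1" by auto
    thus ?thesis using True by simp
  qed (simp; arith)
qed



lemma prod_nth0: "(prod f S) $ 0 = (\<Prod>i\<in>S. f i $ 0)"
proof (induction S rule: infinite_finite_induct)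
  case (insert x F) then show ?case by simp
qed auto

lemma one_minus_Xpow_nth0[simp]: "0 < k \<Longrightarrow> (1 - X ^ k) $ 0 = 1" by simp
lemma one_plus_Xpow_nth0[simp]: "0 < k \<Longrightarrow> (1 + X ^ k) $ 0 = 1" by simp

lemma rinv_split: assumes "P = A * Q" "A $ 0 = 1" "Q $ 0 = 1"
  shows "rinv Q = A * rinv P"
proof -
  have "rinv P = rinv A * rinv Q" using assms by (simp add: rinv_mult)
  hence "A * rinv P = (A * rinv A) * rinv Q" by (simp add: ac_simps)
  thus ?thesis using rinv_right[OF assms(2)] by simp
qed

lemma pow2m: "(y::'a::monoid_mult) ^ (2 * m) = (y ^ m) ^ 2"
  by (metis power_mult mult.commute)
lemma pow4m: "(y::'a::monoid_mult) ^ (4 * m) = (y ^ m) ^ 4"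
  by (metis power_mult mult.commute)

definition cpoch :: "nat \<Rightarrow> int fps" where
  "cpoch n = (\<Prod>j<n. 1 + X ^ (2 * j + 1))"
definition dpoch :: "nat \<Rightarrow> nat \<Rightarrow> int fps" where
  "dpoch m k = (\<Prod>j<k. 1 - X ^ (2 * m + 2 * j + 1))"
definition Gs :: "nat \<Rightarrow> nat \<Rightarrow> int fps" where
  "Gs m N = (\<Sum>n<N. X ^ n * cpoch n * rinv (dpoch m (Suc n)))"

lemma dpoch_0[simp]: "dpoch m k $ 0 = 1"
  unfolding dpoch_def prod_nth0 by simp
lemma cpoch_0[simp]: "cpoch k $ 0 = 1"
  unfolding cpoch_def prod_nth0 by simp
lemma dpoch_Suc: "dpoch m (Suc k) = dpoch m k * (1 - X ^ (2 * m + 2 * k + 1))"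
  by (simp add: dpoch_def)
lemma cpoch_Suc: "cpoch (Suc k) = cpoch k * (1 + X ^ (2 * k + 1))"
  by (simp add: cpoch_def)
lemma dpoch_shift: "dpoch m (Suc k) = (1 - X ^ (2 * m + 1)) * dpoch (Suc m) k"
  unfolding dpoch_def prod.lessThan_Suc_shift by (simp add: algebra_simps)

lemma G_fe: "(1 + X ^ (2 * m + 2)) * Gs (Suc m) N - (1 - X ^ (4 * m + 2)) * Gs m N
   = - (X ^ (2 * m + 1)) + (1 - X ^ (2 * m + 1)) * X ^ (2 * m + N + 1) * cpoch N * rinv (dpoch m (Suc N))"
proof (induction N)
  case 0
  have "dpoch m 1 = 1 - X ^ (2 * m + 1)" by (simp add: dpoch_def)
  hence "(1 - X ^ (2 * m + 1)) * rinv (dpoch m 1) = 1" using rinv_right[of "dpoch m 1"] by simp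
  hence "(1 - X ^ (2 * m + 1)) * X ^ (2 * m + 1) * rinv (dpoch m 1) = X ^ (2 * m + 1)"
    by (metis mult.commute mult.left_commute mult.right_neutral)
  then show ?case by (simp add: Gs_def cpoch_def)
next
  case (Suc N)
  define D where "D = rinv (dpoch m (Suc (Suc N)))"
  have r1: "rinv (dpoch m (Suc N)) = (1 - X ^ (2 * m + 2 * Suc N + 1)) * D"
    unfolding D_def by (rule rinv_split) (auto simp: dpoch_Suc[of m "Suc N"] mult.commute)
  have r2: "rinv (dpoch (Suc m) (Suc N)) = (1 - X ^ (2 * m + 1)) * D"
    unfolding D_def by (rule rinv_split) (auto simp: dpoch_shift[of m "Suc N"])
  define x where "x = X" define a where "a = X ^ m" define bb where "bb = X ^ N"
  define C where "C = cpoch N"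
  have e1: "X ^ (2 * m + 2) = a^2 * x^2" unfolding a_def x_def by (simp add: power_add pow2m pow4m power2_eq_square power3_eq_cube)
  have e2: "X ^ (4 * m + 2) = a^4 * x^2" unfolding a_def x_def by (simp add: power_add pow2m pow4m power2_eq_square power3_eq_cube)
  have e3: "X ^ (2 * m + 1) = a^2 * x" unfolding a_def x_def by (simp add: power_add pow2m pow4m power2_eq_square power3_eq_cube)
  have e4: "X ^ (2 * m + N + 1) = a^2 * bb * x" unfolding a_def x_def bb_def by (simp add: power_add pow2m pow4m power2_eq_square power3_eq_cube)
  have e5: "X ^ (2 * m + Suc N + 1) = a^2 * bb * x^2" unfolding a_def x_def bb_def by (simp add: power_add pow2m pow4m power2_eq_square power3_eq_cube)
  have e6: "X ^ (2 * m + 2 * Suc N + 1) = a^2 * bb^2 * x^3" unfolding a_def x_def bb_def by (simp add: power_add pow2m pow4m power2_eq_square power3_eq_cube)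
  have e7: "X ^ (2 * N + 1) = bb^2 * x" unfolding x_def bb_def by (simp add: power_add pow2m pow4m power2_eq_square power3_eq_cube)
  have IH: "(1 + a^2 * x^2) * Gs (Suc m) N - (1 - a^4 * x^2) * Gs m N
     = - (a^2 * x) + (1 - a^2 * x) * (a^2 * bb * x) * C * ((1 - a^2 * bb^2 * x^3) * D)"
    using Suc.IH unfolding e1 e2 e3 e4 r1 e6 C_def .
  have G1: "Gs (Suc m) (Suc N) = Gs (Suc m) N + bb * C * ((1 - X ^ (2 * m + 1)) * D)"
    by (simp add: Gs_def r2 bb_def C_def)
  have G0: "Gs m (Suc N) = Gs m N + bb * C * ((1 - X ^ (2 * m + 2 * Suc N + 1)) * D)"
    by (simp add: Gs_def r1 bb_def C_def)
  have cS: "cpoch (Suc N) = C * (1 + bb^2 * x)" unfolding e7[symmetric] by (simp add: cpoch_Suc C_def)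
  have alg: "(1 + a^2 * x^2) * (Gs (Suc m) N + bb * C * ((1 - a^2 * x) * D)) -
     (1 - a ^ 4 * x^2) * (Gs m N + bb * C * ((1 - a^2 * bb^2 * x ^ 3) * D)) - 
     (- (a^2 * x) + (1 - a^2 * x) * (a^2 * bb * x^2) * (C * (1 + bb^2 * x)) * D)
   = ((1 + a^2 * x^2) * Gs (Suc m) N - (1 - a ^ 4 * x^2) * Gs m N) - (- (a^2 * x) +
     (1 - a^2 * x) * (a^2 * bb * x) * C * ((1 - a^2 * bb^2 * x ^ 3) * D))"
    by (simp add: algebra_simps power2_eq_square power3_eq_cube power4_eq_xxxx)
  show ?case unfolding G1 G0 cS e1 e2 e3 e5 e6 D_def[symmetric]
    using alg IH by simp
qed



definition Pn :: "int fps \<Rightarrow> int fps \<Rightarrow> nat \<Rightarrow> int fps" where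
  "Pn y x n = (\<Prod>i<n. x + y ^ (2 * i + 1))"
definition Ns :: "int fps \<Rightarrow> int fps \<Rightarrow> nat \<Rightarrow> int fps" where
  "Ns y x K = (\<Sum>n<K. y ^ n * Pn y x n)"

lemma Pn_Suc: "Pn y x (Suc n) = Pn y x n * (x + y ^ (2 * n + 1))"
  by (simp add: Pn_def)

lemma Pn_shift: "Pn y (x * y^2) (Suc n) = y ^ (2 * n + 1) * (1 + x * y) * Pn y x n"
proof (induction n)
  case 0 then show ?case by (simp add: Pn_def algebra_simps power2_eq_square)
next
  case (Suc n)
  define t where "t = y ^ n"
  have e1: "y ^ (2 * n + 1) = t^2 * y" unfolding t_def by (simp add: power_add pow2m)
  have e2: "y ^ (2 * Suc n + 1) = t^2 * y^3" unfolding t_def by (simp add: power_add pow2m power2_eq_square power3_eq_cube)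
  have "Pn y (x * y^2) (Suc (Suc n)) = Pn y (x * y^2) (Suc n) * (x * y^2 + y ^ (2 * Suc n + 1))"
    by (rule Pn_Suc)
  also have "\<dots> = t^2 * y * (1 + x * y) * Pn y x n * (x * y^2 + t^2 * y^3)"
    using Suc.IH unfolding e1 e2 by simp
  also have "\<dots> = t^2 * y^3 * (1 + x * y) * (Pn y x n * (x + t^2 * y))"
    by (simp add: algebra_simps power2_eq_square power3_eq_cube)
  also have "\<dots> = y ^ (2 * Suc n + 1) * (1 + x * y) * Pn y x (Suc n)"
    unfolding e2 Pn_Suc e1 by simp
  finally show ?case .
qed

lemma N_fe: "Ns y (x * y^2) (Suc K) + x * y - (1 - x^2 * y^2) * Ns y x (Suc K)
    = (1 + x * y) * x * y ^ (Suc K) * Pn y x K"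
proof (induction K)
  case 0 then show ?case by (simp add: Ns_def Pn_def algebra_simps power2_eq_square)
next
  case (Suc K)
  define t where "t = y ^ K"
  define A where "A = Ns y (x * y^2) (Suc K)"
  define Bn where "Bn = Ns y x (Suc K)"
  define P where "P = Pn y x K"
  have e1: "y ^ (2 * K + 1) = t^2 * y" unfolding t_def by (simp add: power_add pow2m)
  have e3: "y ^ Suc K = t * y" unfolding t_def by simp
  have e4: "y ^ Suc (Suc K) = t * y^2" unfolding t_def by (simp add: power2_eq_square)
  have NA0: "Ns y (x * y^2) (Suc (Suc K)) = A + y ^ Suc K * Pn y (x * y^2) (Suc K)"
    unfolding A_def by (simp add: Ns_def)
  have NA: "Ns y (x * y^2) (Suc (Suc K)) = A + t * y * (t^2 * y * (1 + x * y) * P)"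
    using NA0 unfolding Pn_shift e1 e3 P_def by simp
  have NB0: "Ns y x (Suc (Suc K)) = Bn + y ^ Suc K * Pn y x (Suc K)"
    unfolding Bn_def by (simp add: Ns_def)
  have NB: "Ns y x (Suc (Suc K)) = Bn + t * y * (P * (x + t^2 * y))"
    using NB0 unfolding Pn_Suc e1 e3 P_def by simp
  have IH: "A + x * y - (1 - x^2 * y^2) * Bn = (1 + x * y) * x * (t * y) * P"
    using Suc.IH unfolding A_def Bn_def P_def e3 .
  have alg: "(A + t * y * (t^2 * y * (1 + x * y) * P)) + x * y - (1 - x^2 * y^2) * (Bn + t * y * (P * (x + t^2 * y)))
      - (1 + x * y) * x * (t * y^2) * (P * (x + t^2 * y))
      = (A + x * y - (1 - x^2 * y^2) * Bn) - (1 + x * y) * x * (t * y) * P"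
    by (simp add: algebra_simps power2_eq_square power3_eq_cube)
  show ?case unfolding NA NB e4 Pn_Suc[of y x K] P_def[symmetric] e1
    using alg IH by simp
qed



definition V :: "int fps \<Rightarrow> nat \<Rightarrow> int fps" where
  "V y i = (\<Prod>j<i. 1 - y ^ (4 * j + 4))"
definition Ef :: "int fps \<Rightarrow> int fps \<Rightarrow> nat \<Rightarrow> int fps" where
  "Ef y z I = (\<Sum>i<I. z ^ i * rinv (V y i))"
definition U :: "int fps \<Rightarrow> nat \<Rightarrow> int fps" where
  "U y m = (\<Prod>j<m. 1 - y ^ (4 * j + 2))"
definition psi :: "int fps \<Rightarrow> nat \<Rightarrow> int fps" where
  "psi y K = (\<Sum>n<K. y ^ (n * n + n))"

lemma pow_nth0: "y $ 0 = 0 \<Longrightarrow> 0 < k \<Longrightarrow> (y ^ k) $ 0 = (0::int)"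
  by (simp add: fps_nth_power_0)

lemma one_minus_pow_nth0: "y $ 0 = 0 \<Longrightarrow> 0 < k \<Longrightarrow> (1 - y ^ k) $ 0 = (1::int)"
  using pow_nth0[of y k] by simp

lemma V_0: "y $ 0 = 0 \<Longrightarrow> V y i $ 0 = 1"
  unfolding V_def prod_nth0 by (simp add: pow_nth0)
lemma U_0: "y $ 0 = 0 \<Longrightarrow> U y i $ 0 = 1"
  unfolding U_def prod_nth0 by (simp add: pow_nth0)

lemma Ef_fe: assumes y0: "y $ 0 = 0"
  shows "Ef y z (Suc I) - Ef y (z * y^4) (Suc I) = z * Ef y z I"
proof (induction I)
  case 0 then show ?case by (simp add: Ef_def V_def)
next
  case (Suc I)
  have VS: "V y (Suc I) = (1 - y ^ (4 * I + 4)) * V y I" by (simp add: V_def mult.commute)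
  have r: "rinv (V y I) = (1 - y ^ (4 * I + 4)) * rinv (V y (Suc I))"
    by (rule rinv_split[OF VS]) (auto simp: y0 one_minus_pow_nth0 V_0)
  have "Ef y z (Suc (Suc I)) - Ef y (z * y^4) (Suc (Suc I))
      = (Ef y z (Suc I) - Ef y (z * y^4) (Suc I)) + z ^ Suc I * ((1 - y ^ (4 * I + 4)) * rinv (V y (Suc I)))"
    by (simp add: Ef_def algebra_simps power_mult_distrib power_mult[symmetric] mult.commute)
  also have "\<dots> = z * Ef y z I + z ^ Suc I * rinv (V y I)" using Suc.IH r by simp
  also have "\<dots> = z * Ef y z (Suc I)" by (simp add: Ef_def algebra_simps)
  finally show ?case .
qed

lemma Ef_fe2: assumes y0: "y $ 0 = 0"
  shows "Ef y z (Suc I) * (1 - z) = Ef y (z * y^4) (Suc I) - z ^ Suc I * rinv (V y I)"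
proof -
  have "Ef y z (Suc I) = Ef y z I + z ^ I * rinv (V y I)" by (simp add: Ef_def)
  hence "Ef y z (Suc I) * (1 - z) = Ef y z (Suc I) - z * Ef y z I - z ^ Suc I * rinv (V y I)"
    by (simp add: algebra_simps)
  thus ?thesis using Ef_fe[OF y0, of z I] by (simp add: algebra_simps)
qed

lemma Xd_pow: "(X ^ d) ^ k = X ^ (d * k)" by (simp add: power_mult)

lemma eqm_Xd0: "M \<le> d * k \<Longrightarrow> eqm M ((X ^ d) ^ k * f) 0"
  unfolding Xd_pow by (rule eqm_Xpow0)

lemma Xd_0: "0 < d \<Longrightarrow> (X ^ d) $ 0 = 0" by simp

lemma Euler_step: assumes d: "0 < d"
  shows "eqm (d * Suc I) (Ef (X^d) ((X^d) ^ (4 * j + 2)) (Suc I) * (1 - (X^d) ^ (4 * j + 2)))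
                        (Ef (X^d) ((X^d) ^ (4 * Suc j + 2)) (Suc I))"
proof -
  let ?y = "X ^ d :: int fps"
  have "4 * Suc j + 2 = (4 * j + 2) + 4" by simp
  hence e: "(?y ^ (4 * j + 2)) * ?y ^ 4 = ?y ^ (4 * Suc j + 2)" by (simp only: power_add)
  have "Ef ?y (?y ^ (4 * j + 2)) (Suc I) * (1 - ?y ^ (4 * j + 2))
     = Ef ?y (?y ^ (4 * Suc j + 2)) (Suc I) - (?y ^ (4 * j + 2)) ^ Suc I * rinv (V ?y I)"
    using Ef_fe2[OF Xd_0[OF d], of "?y ^ (4 * j + 2)" I] e by simp
  moreover have "eqm (d * Suc I) ((?y ^ (4 * j + 2)) ^ Suc I * rinv (V ?y I)) 0"
  proof -
    have "(?y ^ (4 * j + 2)) ^ Suc I = ?y ^ ((4 * j + 2) * Suc I)" by (simp only: power_mult)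
    moreover have "d * Suc I \<le> d * ((4 * j + 2) * Suc I)" by (rule mult_le_mono2) simp
    ultimately show ?thesis using eqm_Xd0 by metis
  qed
  ultimately show ?thesis
    using eqm_diff[OF eqm_refl[of "d * Suc I" "Ef ?y (?y ^ (4 * Suc j + 2)) (Suc I)"]] by force
qed

lemma Euler_prod: assumes d: "0 < d"
  shows "eqm (d * Suc I) (Ef (X^d) ((X^d)^2) (Suc I) * U (X^d) m) (Ef (X^d) ((X^d) ^ (4 * m + 2)) (Suc I))"
proof (induction m)
  case 0 then show ?case by (simp add: U_def power2_eq_square)
next
  case (Suc m)
  let ?y = "X ^ d :: int fps"
  have US: "U ?y (Suc m) = U ?y m * (1 - ?y ^ (4 * m + 2))" by (simp add: U_def)
  have h1: "Ef ?y (?y^2) (Suc I) * U ?y (Suc m) = (Ef ?y (?y^2) (Suc I) * U ?y m) * (1 - ?y ^ (4 * m + 2))"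
    unfolding US by (simp only: mult.assoc)
  have h2: "eqm (d * Suc I) ((Ef ?y (?y^2) (Suc I) * U ?y m) * (1 - ?y ^ (4 * m + 2)))
       (Ef ?y (?y ^ (4 * m + 2)) (Suc I) * (1 - ?y ^ (4 * m + 2)))"
    by (rule eqm_multR[OF Suc.IH])
  show ?case unfolding h1 by (rule eqm_trans[OF h2 Euler_step[OF d, of I m]])
qed

lemma Ef_one: assumes d: "0 < d"
  shows "eqm (d * (4 * m + 2)) (Ef (X^d) ((X^d) ^ (4 * m + 2)) (Suc I)) 1"
proof -
  let ?y = "X ^ d :: int fps"
  have S: "Ef ?y (?y ^ (4 * m + 2)) (Suc I) = 1 + (\<Sum>i<I. (?y ^ (4 * m + 2)) ^ Suc i * rinv (V ?y (Suc i)))"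
    unfolding Ef_def sum.lessThan_Suc_shift by (simp add: V_def)
  have T: "eqm (d * (4 * m + 2)) (\<Sum>i<I. (?y ^ (4 * m + 2)) ^ Suc i * rinv (V ?y (Suc i))) (\<Sum>i<I. 0)"
  proof (rule eqm_sum)
    fix i assume "i \<in> {..<I}"
    have p: "(?y ^ (4 * m + 2)) ^ Suc i = ?y ^ ((4 * m + 2) * Suc i)" by (simp only: power_mult)
    have q: "d * (4 * m + 2) \<le> d * ((4 * m + 2) * Suc i)" by (rule mult_le_mono2) simp
    show "eqm (d * (4 * m + 2)) ((?y ^ (4 * m + 2)) ^ Suc i * rinv (V ?y (Suc i))) 0"
      unfolding p by (rule eqm_Xd0[OF q])
  qed
  have "eqm (d * (4 * m + 2)) (1 + (\<Sum>i<I. (?y ^ (4 * m + 2)) ^ Suc i * rinv (V ?y (Suc i)))) (1 + 0)"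
    using eqm_add[OF eqm_refl T] by simp
  thus ?thesis unfolding S by simp
qed

definition Mm :: "int fps \<Rightarrow> nat \<Rightarrow> int fps" where
  "Mm y m = Ns y (- (y ^ (2 * m + 1))) (Suc m)"

lemma Pn_zero: "m < K \<Longrightarrow> Pn y (- (y ^ (2 * m + 1))) K = 0"
  unfolding Pn_def by (rule prod_zero) auto

lemma Ns_ext: "m < K \<Longrightarrow> Ns y (- (y ^ (2 * m + 1))) K = Mm y m"
proof (induction K)
  case 0 then show ?case by simp
next
  case (Suc K)
  show ?case
  proof (cases "m < K")
    case True
    have "Pn y (- (y ^ (2 * m + 1))) K = 0" by (rule Pn_zero[OF True])
    then show ?thesis using Suc.IH True by (simp add: Ns_def)
  next
    case False
    hence "m = K" using Suc.prems by simp
    then show ?thesis by (simp add: Mm_def)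
  qed
qed

lemma Mm_0: "Mm y 0 = 1"
  by (simp add: Mm_def Ns_def Pn_def)

lemma Mm_rec: "Mm y (Suc m) = (1 - y ^ (4 * m + 4)) * Mm y m + y ^ (2 * m + 2)"
proof -
  let ?x = "- (y ^ (2 * m + 1))"
  have fe: "Ns y (?x * y^2) (Suc (Suc m)) + ?x * y - (1 - ?x^2 * y^2) * Ns y ?x (Suc (Suc m))
    = (1 + ?x * y) * ?x * y ^ (Suc (Suc m)) * Pn y ?x (Suc m)" by (rule N_fe)
  have e1: "?x * y^2 = - (y ^ (2 * Suc m + 1))" by (simp add: power_add power2_eq_square)
  have e2: "?x * y = - (y ^ (2 * m + 2))" by (simp add: power_add)
  have e3: "?x^2 * y^2 = y ^ (4 * m + 4)"
  proof -
    have a: "?x^2 * y^2 = (y ^ (2 * m + 1) * y) ^ 2" by (simp add: power_mult_distrib)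
    have b: "y ^ (2 * m + 1) * y = y ^ (2 * m + 2)" using power_Suc2[of y "2 * m + 1"] by simp
    have c1: "(y ^ (2 * m + 2)) ^ 2 = y ^ ((2 * m + 2) * 2)" by (simp only: power_mult)
    have c2: "(2 * m + 2) * 2 = 4 * m + 4" by simp
    have c: "(y ^ (2 * m + 2)) ^ 2 = y ^ (4 * m + 4)" using c1 unfolding c2 .
    show ?thesis unfolding a b c ..
  qed
  have "Ns y ?x (Suc (Suc m)) = Mm y m" by (rule Ns_ext) simp
  moreover have "Ns y (- (y ^ (2 * Suc m + 1))) (Suc (Suc m)) = Mm y (Suc m)" by (simp add: Mm_def)
  moreover have "Pn y ?x (Suc m) = 0" by (rule Pn_zero) simp
  ultimately show ?thesis using fe unfolding e1 e2 e3 by (simp add: algebra_simps)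
qed

lemma Mm_V: assumes y0: "y $ 0 = 0" shows "Mm y m = V y m * Ef y (y^2) (Suc m)"
proof (induction m)
  case 0 then show ?case by (simp add: Mm_0 V_def Ef_def)
next
  case (Suc m)
  have VS: "V y (Suc m) = V y m * (1 - y ^ (4 * m + 4))" by (simp add: V_def)
  have inv: "V y (Suc m) * rinv (V y (Suc m)) = 1" by (rule rinv_right) (simp add: V_0 y0)
  have EfS: "Ef y (y^2) (Suc (Suc m)) = Ef y (y^2) (Suc m) + y ^ (2 * m + 2) * rinv (V y (Suc m))"
    by (simp add: Ef_def power_mult[symmetric] algebra_simps)
  have "Mm y (Suc m) = (1 - y ^ (4 * m + 4)) * (V y m * Ef y (y^2) (Suc m)) + y ^ (2 * m + 2)"
    using Mm_rec Suc.IH by simp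
  also have "\<dots> = V y (Suc m) * Ef y (y^2) (Suc m) + y ^ (2 * m + 2) * (V y (Suc m) * rinv (V y (Suc m)))"
    unfolding inv by (simp add: VS algebra_simps)
  also have "\<dots> = V y (Suc m) * Ef y (y^2) (Suc (Suc m))"
    unfolding EfS by (simp add: algebra_simps)
  finally show ?case .
qed

lemma prod_pow_odd: "(\<Prod>i<n. (y::int fps) ^ (2 * i + 1)) = y ^ (n * n)"
proof (induction n)
  case (Suc n)
  have e: "n * n + (2 * n + 1) = Suc n * Suc n" by simp
  have "(\<Prod>i<Suc n. y ^ (2 * i + 1)) = (\<Prod>i<n. y ^ (2 * i + 1)) * y ^ (2 * n + 1)"
    by (rule prod.lessThan_Suc)
  also have "\<dots> = y ^ (n * n + (2 * n + 1))" unfolding Suc.IH by (rule power_add[symmetric])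
  finally show ?case unfolding e .
qed simp

lemma Mm_psi: assumes d: "0 < d" and K: "m < K"
  shows "eqm (d * (2 * m + 1)) (Mm (X^d) m) (psi (X^d) K)"
proof -
  let ?y = "X ^ d :: int fps" and ?M = "d * (2 * m + 1)"
  let ?x = "- (?y ^ (2 * m + 1))"
  have "Mm ?y m = Ns ?y ?x K" by (rule Ns_ext[OF K, symmetric])
  also have "eqm ?M (Ns ?y ?x K) (psi ?y K)"
    unfolding Ns_def psi_def
  proof (rule eqm_sum)
    fix n assume "n \<in> {..<K}"
    show "eqm ?M (?y ^ n * Pn ?y ?x n) (?y ^ (n * n + n))"
    proof (cases "n \<le> m")
      case True
      have x0: "eqm ?M ?x 0" using eqm_uminus[OF eqm_Xd0[of ?M d "2 * m + 1" 1]] by simp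
      have P1: "eqm ?M (Pn ?y ?x n) (\<Prod>i<n. 0 + ?y ^ (2 * i + 1))"
        unfolding Pn_def by (rule eqm_prod, rule eqm_add[OF x0 eqm_refl])
      have P2: "(\<Prod>i<n. 0 + ?y ^ (2 * i + 1)) = ?y ^ (n * n)"
        by (simp only: add_0 prod_pow_odd)
      have "eqm ?M (Pn ?y ?x n) (?y ^ (n * n))" using P1 unfolding P2 .
      hence P3: "eqm ?M (?y ^ n * Pn ?y ?x n) (?y ^ n * ?y ^ (n * n))" by (rule eqm_multL)
      have P4: "?y ^ n * ?y ^ (n * n) = ?y ^ (n * n + n)"
        by (metis power_add add.commute)
      show ?thesis using P3 unfolding P4 .
    next
      case False
      have z: "Pn ?y ?x n = 0" using False by (intro Pn_zero) simp
      have "n \<le> n * n" by (rule le_square)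
      hence le: "2 * m + 1 \<le> n * n + n" using False by linarith
      have "eqm ?M (?y ^ (n * n + n) * 1) 0"
        by (rule eqm_Xd0, rule mult_le_mono2[OF le])
      hence "eqm ?M 0 (?y ^ (n * n + n))" by (simp add: eqm_def)
      thus ?thesis unfolding z by simp
    qed
  qed
  finally show ?thesis .
qed

lemma Gauss: assumes d: "0 < d" and K: "m < K"
  shows "eqm (d * Suc m) (psi (X^d) K * U (X^d) m) (V (X^d) m)"
proof -
  let ?y = "X ^ d :: int fps"
  have m1: "eqm (d * Suc m) (Mm ?y m) (psi ?y K)"
    by (rule eqm_mono[OF Mm_psi[OF d K]]) simp
  have m2: "Mm ?y m * U ?y m = V ?y m * (Ef ?y (?y^2) (Suc m) * U ?y m)"
    unfolding Mm_V[OF Xd_0[OF d]] by (simp only: mult.assoc)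
  have e1: "eqm (d * Suc m) (Ef ?y (?y^2) (Suc m) * U ?y m) (Ef ?y (?y ^ (4 * m + 2)) (Suc m))"
    by (rule Euler_prod[OF d])
  have e2: "eqm (d * Suc m) (Ef ?y (?y ^ (4 * m + 2)) (Suc m)) 1"
    by (rule eqm_mono[OF Ef_one[OF d]]) simp
  have "eqm (d * Suc m) (V ?y m * (Ef ?y (?y^2) (Suc m) * U ?y m)) (V ?y m * 1)"
    by (rule eqm_multL, rule eqm_trans[OF e1 e2])
  hence A1: "eqm (d * Suc m) (Mm ?y m * U ?y m) (V ?y m)" unfolding m2 by (simp only: mult_1_right)
  have B1: "eqm (d * Suc m) (Mm ?y m * U ?y m) (psi ?y K * U ?y m)"
    by (rule eqm_multR[OF m1])
  show ?thesis by (rule eqm_trans[OF eqm_sym[OF B1] A1])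
qed



definition W :: "nat \<Rightarrow> int fps" where "W m = (\<Prod>i<m. 1 + X ^ (2 * i + 2))"
definition G0 :: "nat \<Rightarrow> int fps" where "G0 N = (\<Sum>n<N. X ^ n * cpoch n)"

lemma eqm_Xpow0_1: "M \<le> n \<Longrightarrow> eqm M (X ^ n) 0"
  using eqm_Xpow0[of M n 1] by simp

lemma is_ev_1p: "even k \<Longrightarrow> is_ev (1 + X ^ k)" by (intro is_ev_add is_ev_1 is_ev_Xpow)
lemma is_ev_1m: "even k \<Longrightarrow> is_ev (1 - X ^ k)" by (intro is_ev_diff is_ev_1 is_ev_Xpow)

lemma ev_0[simp]: "ev 0 = 0" by (rule fps_ext) simp

lemma G_ev: "eqm N ((1 + X ^ (2 * m + 2)) * ev (Gs (Suc m) N)) ((1 - X ^ (4 * m + 2)) * ev (Gs m N))"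
proof -
  define E where "E = (1 - X ^ (2 * m + 1)) * X ^ (2 * m + N + 1) * cpoch N * rinv (dpoch m (Suc N))"
  have e0: "eqm N E 0"
  proof -
    have "E = X ^ (2 * m + N + 1) * ((1 - X ^ (2 * m + 1)) * cpoch N * rinv (dpoch m (Suc N)))"
      unfolding E_def by (simp only: ac_simps)
    thus ?thesis using eqm_Xpow0[of N "2 * m + N + 1"] by simp
  qed
  have h: "(1 + X ^ (2 * m + 2)) * Gs (Suc m) N - (1 - X ^ (4 * m + 2)) * Gs m N = - (X ^ (2 * m + 1)) + E"
    unfolding E_def by (rule G_fe)
  have h1: "ev ((1 + X ^ (2 * m + 2)) * Gs (Suc m) N - (1 - X ^ (4 * m + 2)) * Gs m N) = ev (- (X ^ (2 * m + 1)) + E)"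
    using h by (rule arg_cong)
  have o: "odd (2 * m + 1)" by simp
  have h2: "(1 + X ^ (2 * m + 2)) * ev (Gs (Suc m) N) - (1 - X ^ (4 * m + 2)) * ev (Gs m N) = ev E"
    using h1 by (simp only: ev_diff ev_add ev_uminus ev_mult_ev[OF is_ev_1p[of "2 * m + 2"]] ev_mult_ev[OF is_ev_1m[of "4 * m + 2"]]
      ev_odd_Xpow[OF o] minus_zero add_0_left even_add even_mult_iff even_numeral odd_one simp_thms)
  have "eqm N (ev E) 0" using eqm_ev[OF e0] by simp
  thus ?thesis unfolding eqm_iff_diff[of N "(1 + X ^ (2 * m + 2)) * ev (Gs (Suc m) N)"] h2 .
qed

lemma U_Suc: "U y (Suc m) = U y m * (1 - y ^ (4 * m + 2))" by (simp add: U_def)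
lemma W_Suc: "W (Suc m) = W m * (1 + X ^ (2 * m + 2))" by (simp add: W_def)
lemma V_Suc: "V y (Suc m) = V y m * (1 - y ^ (4 * m + 4))" by (simp add: V_def)

lemma G_ind: "eqm N (ev (Gs 0 N) * U X m) (ev (Gs m N) * W m)"
proof (induction m)
  case 0 then show ?case by (simp add: U_def W_def)
next
  case (Suc m)
  have "ev (Gs 0 N) * U X (Suc m) = (ev (Gs 0 N) * U X m) * (1 - X ^ (4 * m + 2))"
    unfolding U_Suc by (simp only: mult.assoc)
  also have "eqm N \<dots> ((ev (Gs m N) * W m) * (1 - X ^ (4 * m + 2)))"
    by (rule eqm_multR[OF Suc.IH])
  also have "(ev (Gs m N) * W m) * (1 - X ^ (4 * m + 2)) = W m * ((1 - X ^ (4 * m + 2)) * ev (Gs m N))"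
    by (simp only: ac_simps)
  also have "eqm N \<dots> (W m * ((1 + X ^ (2 * m + 2)) * ev (Gs (Suc m) N)))"
    by (rule eqm_multL[OF eqm_sym[OF G_ev]])
  also have "W m * ((1 + X ^ (2 * m + 2)) * ev (Gs (Suc m) N)) = ev (Gs (Suc m) N) * W (Suc m)"
    unfolding W_Suc by (simp only: ac_simps)
  finally show ?case .
qed

lemma dpoch_eqm1: "eqm (2 * m + 1) (dpoch m k) 1"
proof -
  have "eqm (2 * m + 1) (dpoch m k) (\<Prod>j<k. 1 - 0)"
    unfolding dpoch_def
    by (rule eqm_prod, rule eqm_diff[OF eqm_refl eqm_Xpow0_1]) simp
  thus ?thesis by simp
qed

lemma Gs_G0: "eqm (2 * m + 1) (Gs m N) (G0 N)"
  unfolding Gs_def G0_def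
proof (rule eqm_sum)
  fix n assume "n \<in> {..<N}"
  have "eqm (2 * m + 1) (rinv (dpoch m (Suc n))) (rinv 1)"
    by (rule eqm_rinv[OF dpoch_eqm1]) simp_all
  hence "eqm (2 * m + 1) (rinv (dpoch m (Suc n))) 1" by simp
  from eqm_multL[OF this, of "X ^ n * cpoch n"]
  have "eqm (2 * m + 1) (X ^ n * cpoch n * rinv (dpoch m (Suc n))) (X ^ n * cpoch n * 1)" .
  thus "eqm (2 * m + 1) (X ^ n * cpoch n * rinv (dpoch m (Suc n))) (X ^ n * cpoch n)" by simp
qed

lemma N_ev: "eqm (Suc K) (ev (Ns X (X ^ (2 * Suc m)) (Suc K))) ((1 - X ^ (4 * m + 2)) * ev (Ns X (X ^ (2 * m)) (Suc K)))"
proof -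
  let ?x = "X ^ (2 * m) :: int fps"
  have fe: "Ns X (?x * X^2) (Suc K) + ?x * X - (1 - ?x^2 * X^2) * Ns X ?x (Suc K)
     = (1 + ?x * X) * ?x * X ^ (Suc K) * Pn X ?x K" by (rule N_fe)
  have e1: "?x * X^2 = X ^ (2 * Suc m)" by (simp add: power_add[symmetric])
  have e2: "?x * X = X ^ (2 * m + 1)" by (simp add: power_add[symmetric])
  have e3: "?x^2 * X^2 = X ^ (4 * m + 2)"
    by (simp add: power_add[symmetric] power_mult[symmetric] algebra_simps)
  define E where "E = (1 + ?x * X) * ?x * X ^ (Suc K) * Pn X ?x K"
  have e0: "eqm (Suc K) E 0"
  proof -
    have "E = X ^ (Suc K) * ((1 + ?x * X) * ?x * Pn X ?x K)"
      unfolding E_def by (simp only: ac_simps)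
    thus ?thesis using eqm_Xpow0[of "Suc K" "Suc K"] by simp
  qed
  have h: "Ns X (X ^ (2 * Suc m)) (Suc K) + X ^ (2 * m + 1) - (1 - X ^ (4 * m + 2)) * Ns X ?x (Suc K) = E"
    using fe unfolding e1 e2 e3 E_def .
  hence h1: "ev (Ns X (X ^ (2 * Suc m)) (Suc K) + X ^ (2 * m + 1) - (1 - X ^ (4 * m + 2)) * Ns X ?x (Suc K)) = ev E"
    by (rule arg_cong)
  have o: "odd (2 * m + 1)" by simp
  have h2: "ev (Ns X (X ^ (2 * Suc m)) (Suc K)) - (1 - X ^ (4 * m + 2)) * ev (Ns X ?x (Suc K)) = ev E"
    using h1 by (simp only: ev_diff ev_add ev_mult_ev[OF is_ev_1m[of "4 * m + 2"]] ev_odd_Xpow[OF o] add_0_right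
      even_add even_mult_iff even_numeral odd_one simp_thms)
  have "eqm (Suc K) (ev E) 0" using eqm_ev[OF e0] by simp
  thus ?thesis unfolding eqm_iff_diff[of "Suc K" "ev (Ns X (X ^ (2 * Suc m)) (Suc K))"] h2 .
qed

lemma N_ind: "eqm (Suc K) (ev (Ns X 1 (Suc K)) * U X m) (ev (Ns X (X ^ (2 * m)) (Suc K)))"
proof (induction m)
  case 0 then show ?case by (simp add: U_def)
next
  case (Suc m)
  have "ev (Ns X 1 (Suc K)) * U X (Suc m) = (ev (Ns X 1 (Suc K)) * U X m) * (1 - X ^ (4 * m + 2))"
    unfolding U_Suc by (simp only: mult.assoc)
  also have "eqm (Suc K) \<dots> (ev (Ns X (X ^ (2 * m)) (Suc K)) * (1 - X ^ (4 * m + 2)))"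
    by (rule eqm_multR[OF Suc.IH])
  also have "ev (Ns X (X ^ (2 * m)) (Suc K)) * (1 - X ^ (4 * m + 2)) = (1 - X ^ (4 * m + 2)) * ev (Ns X (X ^ (2 * m)) (Suc K))"
    by (rule mult.commute)
  also have "eqm (Suc K) \<dots> (ev (Ns X (X ^ (2 * Suc m)) (Suc K)))"
    by (rule eqm_sym[OF N_ev])
  finally show ?case .
qed

lemma N_psi: "eqm (2 * m) (Ns X (X ^ (2 * m)) K) (psi X K)"
  unfolding Ns_def psi_def
proof (rule eqm_sum)
  fix n assume "n \<in> {..<K}"
  have x0: "eqm (2 * m) (X ^ (2 * m)) 0" by (rule eqm_Xpow0_1) simp
  have P1: "eqm (2 * m) (Pn X (X ^ (2 * m)) n) (\<Prod>i<n. 0 + X ^ (2 * i + 1))"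
    unfolding Pn_def by (rule eqm_prod, rule eqm_add[OF x0 eqm_refl])
  have P2: "(\<Prod>i<n. 0 + X ^ (2 * i + 1)) = X ^ (n * n)"
    by (simp only: add_0 prod_pow_odd)
  have "eqm (2 * m) (Pn X (X ^ (2 * m)) n) (X ^ (n * n))" using P1 unfolding P2 .
  hence P3: "eqm (2 * m) (X ^ n * Pn X (X ^ (2 * m)) n) (X ^ n * X ^ (n * n))" by (rule eqm_multL)
  have P4: "X ^ n * X ^ (n * n) = X ^ (n * n + n)"
    by (metis power_add add.commute)
  show "eqm (2 * m) (X ^ n * Pn X (X ^ (2 * m)) n) (X ^ (n * n + n))" using P3 unfolding P4 .
qed

lemma is_ev_psi: "is_ev (psi X K)"
  unfolding psi_def
proof (induction K)
  case (Suc K)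
  have "even (K * K + K)" by simp
  then show ?case using Suc by (simp add: is_ev_add is_ev_Xpow)
qed simp

lemma Ns_G0: "Ns X 1 K = G0 K"
  unfolding Ns_def G0_def Pn_def cpoch_def by (simp add: add.commute)



definition R :: "nat \<Rightarrow> int fps" where "R m = (\<Prod>i<m. 1 - X ^ (2 * m + 2 + 2 * i))"

lemma R_step: "R m * (1 - X ^ (4 * m + 2)) * (1 - X ^ (4 * m + 4)) = (1 - X ^ (2 * m + 2)) * R (Suc m)"
proof -
  have a1: "2 * m + 2 + 2 * m = 4 * m + 2" by simp
  have a: "R m * (1 - X ^ (4 * m + 2)) = (\<Prod>i<Suc m. 1 - X ^ (2 * m + 2 + 2 * i))"
    unfolding R_def prod.lessThan_Suc a1 ..
  have b1: "\<And>i. 2 * m + 2 + 2 * Suc i = 2 * m + 4 + 2 * i" by simp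
  have b2: "2 * m + 2 + 2 * 0 = 2 * m + 2" by simp
  have b: "(\<Prod>i<Suc m. 1 - X ^ (2 * m + 2 + 2 * i)) = (1 - X ^ (2 * m + 2)) * (\<Prod>i<m. 1 - X ^ (2 * m + 4 + 2 * i))"
    unfolding prod.lessThan_Suc_shift b1 b2 ..
  have c1: "\<And>i. 2 * Suc m + 2 + 2 * i = 2 * m + 4 + 2 * i" by simp
  have c2: "2 * m + 4 + 2 * m = 4 * m + 4" by simp
  have c: "(\<Prod>i<m. 1 - X ^ (2 * m + 4 + 2 * i)) * (1 - X ^ (4 * m + 4)) = R (Suc m)"
    unfolding R_def c1 prod.lessThan_Suc c2 ..
  show ?thesis unfolding a b c[symmetric] by (simp only: ac_simps)
qed

lemma one_minus_Xpow_nz: "0 < k \<Longrightarrow> (1 - X ^ k) \<noteq> 0"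
proof
  assume "0 < k" "1 - X ^ k = 0"
  hence "(1 - X ^ k) $ 0 = 0" by simp
  thus False using \<open>0 < k\<close> by simp
qed

lemma WU: "W m * U X m = R m"
proof (induction m)
  case 0 then show ?case by (simp add: W_def U_def R_def)
next
  case (Suc m)
  have sq: "(1 + X ^ (2 * m + 2)) * (1 - X ^ (2 * m + 2)) = 1 - X ^ (4 * m + 4)"
  proof -
    have e: "(2 * m + 2) + (2 * m + 2) = 4 * m + 4" by simp
    have "X ^ (2 * m + 2) * X ^ (2 * m + 2) = X ^ (4 * m + 4)" by (simp only: power_add[symmetric] e)
    thus ?thesis by (simp add: algebra_simps)
  qed
  have "(1 - X ^ (4 * m + 4)) * (W (Suc m) * U X (Suc m))
      = (1 + X ^ (2 * m + 2)) * (R m * (1 - X ^ (4 * m + 2)) * (1 - X ^ (4 * m + 4)))"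
    unfolding W_Suc U_Suc Suc.IH[symmetric] by (simp only: ac_simps)
  also have "\<dots> = ((1 + X ^ (2 * m + 2)) * (1 - X ^ (2 * m + 2))) * R (Suc m)"
    unfolding R_step by (simp only: ac_simps)
  also have "\<dots> = (1 - X ^ (4 * m + 4)) * R (Suc m)" unfolding sq ..
  finally show ?case using one_minus_Xpow_nz[of "4 * m + 4"] by simp
qed

lemma R_eqm: "eqm (2 * m + 2) (R m) 1"
proof -
  have "eqm (2 * m + 2) (R m) (\<Prod>i<m. 1 - 0)"
    unfolding R_def by (rule eqm_prod, rule eqm_diff[OF eqm_refl eqm_Xpow0_1]) simp
  thus ?thesis by simp
qed

lemma Gauss1: "m < K \<Longrightarrow> eqm (Suc m) (psi X K * U X m) (V X m)"
  using Gauss[of 1 m K] by simp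

lemma Gauss2: "p < K \<Longrightarrow> eqm (2 * Suc p) (psi (X^2) K * U (X^2) p) (V (X^2) p)"
  using Gauss[of 2 p K] by simp

lemma X2pow: "(X ^ 2) ^ k = X ^ (2 * k)" by (simp add: power_mult)

lemma Vsplit: "V X (2 * p) = U (X^2) p * V (X^2) p"
proof (induction p)
  case 0 then show ?case by (simp add: V_def U_def)
next
  case (Suc p)
  have x1: "4 * (2 * p) + 4 = 2 * (4 * p + 2)" by simp
  have x2: "4 * Suc (2 * p) + 4 = 2 * (4 * p + 4)" by simp
  have x3: "2 * Suc p = Suc (Suc (2 * p))" by simp
  have "V X (2 * Suc p) = V X (2 * p) * (1 - X ^ (4 * (2 * p) + 4)) * (1 - X ^ (4 * Suc (2 * p) + 4))"
    unfolding x3 V_Suc ..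
  also have "\<dots> = (U (X^2) p * (1 - (X^2) ^ (4 * p + 2))) * (V (X^2) p * (1 - (X^2) ^ (4 * p + 4)))"
    unfolding Suc.IH X2pow x1 x2 by (simp only: ac_simps)
  also have "\<dots> = U (X^2) (Suc p) * V (X^2) (Suc p)" by (simp only: U_Suc V_Suc)
  finally show ?case .
qed

definition Uq :: "nat \<Rightarrow> int fps" where "Uq p = (\<Prod>i<p. 1 + X ^ (4 * i + 2))"

lemma U2split: "U (X^2) p = U X p * Uq p"
  unfolding U_def Uq_def prod.distrib[symmetric]
proof (rule prod.cong[OF refl])
  fix i
  have "X ^ (4 * i + 2) * X ^ (4 * i + 2) = (X ^ 2) ^ (4 * i + 2)"
    unfolding X2pow by (simp add: power_add[symmetric])
  thus "1 - (X ^ 2) ^ (4 * i + 2) = (1 - X ^ (4 * i + 2)) * (1 + X ^ (4 * i + 2))"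
    by (simp add: algebra_simps)
qed

lemma U_trunc: "p \<le> m' \<Longrightarrow> eqm (4 * p + 2) (U X m') (U X p)"
proof (induction m' rule: dec_induct)
  case base then show ?case by simp
next
  case (step m')
  have "eqm (4 * p + 2) (1 - X ^ (4 * m' + 2)) (1 - 0)"
    by (rule eqm_diff[OF eqm_refl eqm_Xpow0_1]) (use step in simp)
  hence "eqm (4 * p + 2) (U X m' * (1 - X ^ (4 * m' + 2))) (U X p * (1 - 0))"
    by (rule eqm_mult[OF step.IH])
  thus ?case by (simp add: U_Suc)
qed

lemma is_ev_U: "is_ev (U X p)"
  unfolding U_def by (rule is_ev_prod, rule is_ev_1m) simp
lemma is_ev_Uq: "is_ev (Uq p)"
  unfolding Uq_def by (rule is_ev_prod, rule is_ev_1p) simp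

lemma sg_U: "sg (U X p) = Uq p"
proof -
  have "sg (U X p) = (\<Prod>i<p. sg (1 - X ^ (4 * i + 2)))"
    unfolding U_def by (rule sg_prod, rule is_ev_1m) simp
  also have "\<dots> = Uq p" unfolding Uq_def sg_diff sg_1 sg_Xpow_4_2 by simp
  finally show ?thesis .
qed

lemma sg_Uq: "sg (Uq p) = U X p"
proof -
  have "sg (Uq p) = (\<Prod>i<p. sg (1 + X ^ (4 * i + 2)))"
    unfolding Uq_def by (rule sg_prod, rule is_ev_1p) simp
  also have "\<dots> = U X p" unfolding U_def sg_add sg_1 sg_Xpow_4_2 by simp
  finally show ?thesis .
qed

lemma sg_Xpow_dvd4: "4 dvd k \<Longrightarrow> sg (X ^ k) = X ^ k"
  by (elim dvdE) (simp add: sg_Xpow_4)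

lemma sg_psi2: "sg (psi (X^2) K) = psi (X^2) K"
  unfolding psi_def
proof (induction K)
  case (Suc K)
  have "even (K * K + K)" by simp
  then obtain t where t: "K * K + K = 2 * t" by (elim evenE)
  hence "2 * (K * K + K) = 4 * t" by simp
  hence "4 dvd (2 * (K * K + K))" by (metis dvd_triv_left)
  hence "sg ((X^2) ^ (K * K + K)) = (X^2) ^ (K * K + K)" unfolding X2pow by (rule sg_Xpow_dvd4)
  then show ?case using Suc by (simp add: sg_add)
qed (simp add: sg_def fps_zero_def)

lemma is_ev_psi2: "is_ev (psi (X^2) K)"
  unfolding psi_def
proof (induction K)
  case (Suc K)
  have "is_ev ((X^2) ^ (K * K + K))" unfolding X2pow by (rule is_ev_Xpow) simp
  then show ?case using Suc by (simp add: is_ev_add)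
qed simp



lemma Bterm_eq: "Bterm n = X ^ n * cpoch n * rinv (dpoch 0 (Suc n))"
proof -
  have c: "qpoch (- X) (X ^ 2) n = cpoch n"
    unfolding qpoch_def cpoch_def
    by (rule prod.cong[OF refl]) (simp add: X2pow power_add mult.commute)
  have d: "qpoch X (X ^ 2) (Suc n) = dpoch 0 (Suc n)"
    unfolding qpoch_def dpoch_def
    by (rule prod.cong[OF refl]) (simp add: X2pow power_add mult.commute)
  show ?thesis unfolding Bterm_def c d rinv_def ..
qed

lemma b_Gs: assumes "m < N" shows "b m = (Gs 0 N) $ m"
proof -
  have "(Gs 0 N) $ m = (\<Sum>n<N. Bterm n $ m)"
    unfolding Gs_def fps_sum_nth Bterm_eq ..
  also have "\<dots> = (\<Sum>n\<le>m. Bterm n $ m)"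
  proof (rule sum.mono_neutral_right)
    show "finite {..<N}" by simp
    show "{..m} \<subseteq> {..<N}" using assms by auto
    show "\<forall>i\<in>{..<N} - {..m}. Bterm i $ m = 0"
    proof
      fix i assume "i \<in> {..<N} - {..m}"
      hence "m < i" by auto
      thus "Bterm i $ m = 0" unfolding Bterm_eq mult.assoc by (simp add: fps_X_power_mult_nth)
    qed
  qed
  finally show ?thesis unfolding b_def by simp
qed

lemma tri_inj: "k * k + k = j * j + (j::nat) \<Longrightarrow> k = j"
proof (rule ccontr)
  assume h: "k * k + k = j * j + j" "k \<noteq> j"
  show False
  proof (cases "k < j")
    case True
    hence "k * k \<le> j * j" by (simp add: mult_le_mono)
    thus False using h True by linarith
  next
    case False
    hence "j < k" using h by simp
    hence "j * j \<le> k * k" by (simp add: mult_le_mono)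
    thus False using h \<open>j < k\<close> by linarith
  qed
qed

lemma psi2_coeff: assumes "4 * n < N"
  shows "(psi (X^2) N) $ (4 * n) = (if (\<exists>k. k * k + k = 2 * n) then 1 else 0)"
proof -
  have "(psi (X^2) N) $ (4 * n) = (\<Sum>k<N. if 4 * n = 2 * (k * k + k) then 1 else 0)"
    unfolding psi_def fps_sum_nth X2pow by simp
  also have "\<dots> = (\<Sum>k<N. if k * k + k = 2 * n then 1 else 0)"
    by (rule sum.cong) auto
  also have "\<dots> = (if (\<exists>k. k * k + k = 2 * n) then 1 else 0)"
  proof (cases "\<exists>k. k * k + k = 2 * n")
    case True
    then obtain k0 where k0: "k0 * k0 + k0 = 2 * n" by blast
    have "k0 \<le> k0 * k0 + k0" by simp
    hence "k0 < N" using k0 assms by linarith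
    have "(\<Sum>k<N. if k * k + k = 2 * n then 1 else 0) = (\<Sum>k<N. if k = k0 then 1 else (0::int))"
      by (rule sum.cong[OF refl]) (use k0 tri_inj in metis)
    also have "\<dots> = 1" using \<open>k0 < N\<close> by simp
    finally show ?thesis using True by simp
  next
    case False
    then show ?thesis by simp
  qed
  finally show ?thesis .
qed

lemma X0: "X $ 0 = 0" by simp

lemma quart: fixes u a :: "'a::comm_ring_1"
  shows "(u + a + a) ^ 4 + u ^ 4 = 2 * (u ^ 2 * (u + a + a) ^ 2) + 16 * (a ^ 2 * (u + a) ^ 2)"
  by (simp add: algebra_simps power4_eq_xxxx power2_eq_square)

lemma main_congr: "\<exists>c. b (4 * n) = (if (\<exists>k. k * k + k = 2 * n) then 1 else 0) + 8 * c"
proof -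
  define p where "p = 4 * n + 1"
  define m where "m = 2 * p"
  define N where "N = Suc m"
  define M where "M = Suc p"
  define FF where "FF = ev (Gs 0 N)"
  define E0 where "E0 = ev (G0 N)"
  define ps1 where "ps1 = psi X N"
  define ps2 where "ps2 = psi (X^2) N"
  define Um where "Um = U X m"
  define Up where "Up = U X p"
  define Q where "Q = Uq p"
  define U2 where "U2 = U (X^2) p"
  have MN: "M \<le> N" "M \<le> 2 * m + 1" "M \<le> 2 * m" "M \<le> Suc m" "M \<le> 2 * m + 2" "M \<le> 2 * Suc p"
    "M \<le> 4 * p + 2" unfolding M_def m_def N_def p_def by auto
  have a1: "eqm N (FF * Um) (ev (Gs m N) * W m)" unfolding FF_def Um_def by (rule G_ind)
  have a2: "eqm (2 * m + 1) (ev (Gs m N)) E0" unfolding E0_def by (rule eqm_ev[OF Gs_G0])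
  have a: "eqm M (FF * Um) (E0 * W m)"
    using eqm_trans[OF eqm_mono[OF a1 MN(1)] eqm_multR[OF eqm_mono[OF a2 MN(2)]]] .
  have b1: "eqm N (ev (Ns X 1 N) * Um) (ev (Ns X (X ^ (2 * m)) N))"
    unfolding N_def Um_def by (rule N_ind)
  have b2: "eqm (2 * m) (ev (Ns X (X ^ (2 * m)) N)) ps1"
    using eqm_ev[OF N_psi[of m N]] unfolding ps1_def ev_is_ev[OF is_ev_psi] .
  have b: "eqm M (E0 * Um) ps1"
    using eqm_trans[OF eqm_mono[OF b1 MN(1)] eqm_mono[OF b2 MN(3)]] unfolding E0_def Ns_G0 .
  have c: "eqm M (ps1 * Um) (V X m)"
    using eqm_mono[OF Gauss1[of m N] MN(4)] unfolding ps1_def Um_def N_def by simp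
  have d: "eqm M (W m * Um) 1"
    using eqm_mono[OF R_eqm[of m] MN(5)] unfolding Um_def WU .
  have e: "eqm M (FF * Um ^ 4) (V X m)"
  proof -
    have "FF * Um ^ 4 = (FF * Um) * (Um * Um * Um)" by (simp add: power4_eq_xxxx ac_simps)
    also have "eqm M \<dots> ((E0 * W m) * (Um * Um * Um))" by (rule eqm_multR[OF a])
    also have "(E0 * W m) * (Um * Um * Um) = (E0 * Um) * ((W m * Um) * Um)" by (simp only: ac_simps)
    also have "eqm M \<dots> (ps1 * (1 * Um))" by (rule eqm_mult[OF b eqm_multR[OF d]])
    also have "ps1 * (1 * Um) = ps1 * Um" by simp
    also have "eqm M \<dots> (V X m)" by (rule c)
    finally show ?thesis .
  qed
  have f: "eqm M (V X m) (U2 * (ps2 * U2))"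
  proof -
    have vs: "V X m = U2 * V (X^2) p" unfolding m_def U2_def by (rule Vsplit)
    have pN: "p < N" unfolding N_def m_def by simp
    have G2': "eqm M (ps2 * U2) (V (X^2) p)"
      unfolding ps2_def U2_def by (rule eqm_mono[OF Gauss2[OF pN] MN(6)])
    show ?thesis unfolding vs by (rule eqm_multL[OF eqm_sym[OF G2']])
  qed
  have g: "eqm M Um Up" unfolding Um_def Up_def m_def by (rule eqm_mono[OF U_trunc MN(7)]) simp
  have U2e: "U2 = Up * Q" unfolding U2_def Up_def Q_def by (rule U2split)
  have Up0: "Up $ 0 = 1" unfolding Up_def by (rule U_0) simp
  have Q0: "Q $ 0 = 1" unfolding Q_def Uq_def prod_nth0 by simp
  have h0: "eqm M ((FF * Up ^ 2) * Up ^ 2) ((ps2 * Q ^ 2) * Up ^ 2)"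
  proof -
    have "(FF * Up ^ 2) * Up ^ 2 = FF * Up ^ 4" by (simp add: power4_eq_xxxx power2_eq_square ac_simps)
    also have "eqm M \<dots> (FF * Um ^ 4)" by (rule eqm_multL, rule eqm_power, rule eqm_sym[OF g])
    also have "eqm M \<dots> (V X m)" by (rule e)
    also have "eqm M \<dots> (U2 * (ps2 * U2))" by (rule f)
    also have "U2 * (ps2 * U2) = (ps2 * Q ^ 2) * Up ^ 2" unfolding U2e by (simp add: power2_eq_square ac_simps)
    finally show ?thesis .
  qed
  have h: "eqm M (FF * Up ^ 2) (ps2 * Q ^ 2)"
    by (rule eqm_cancel[OF h0]) (simp add: Up0 power2_eq_square)
  have evFF: "is_ev FF" unfolding FF_def by simp
  have evUp: "is_ev Up" unfolding Up_def by (rule is_ev_U)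
  have evQ: "is_ev Q" unfolding Q_def by (rule is_ev_Uq)
  have evps2: "is_ev ps2" unfolding ps2_def by (rule is_ev_psi2)
  have sgUp: "sg Up = Q" unfolding Up_def Q_def by (rule sg_U)
  have sgQ: "sg Q = Up" unfolding Up_def Q_def by (rule sg_Uq)
  have sgps2: "sg ps2 = ps2" unfolding ps2_def by (rule sg_psi2)
  have i: "eqm M (sg FF * Q ^ 2) (ps2 * Up ^ 2)"
  proof -
    have "eqm M (sg (FF * Up ^ 2)) (sg (ps2 * Q ^ 2))" by (rule eqm_sg[OF h])
    moreover have "sg (FF * Up ^ 2) = sg FF * Q ^ 2"
      unfolding sg_mult[OF evFF] sg_power[OF evUp] sgUp ..
    moreover have "sg (ps2 * Q ^ 2) = ps2 * Up ^ 2"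
      unfolding sg_mult[OF evps2] sg_power[OF evQ] sgQ sgps2 ..
    ultimately show ?thesis by simp
  qed
  define V' where "V' = Up ^ 2 * Q ^ 2"
  have V'0: "V' $ 0 = 1" unfolding V'_def by (simp add: Up0 Q0 power2_eq_square)
  have j: "eqm M ((FF + sg FF) * V') (ps2 * (Q ^ 4 + Up ^ 4))"
  proof -
    have "(FF + sg FF) * V' = (FF * Up ^ 2) * Q ^ 2 + (sg FF * Q ^ 2) * Up ^ 2"
      unfolding V'_def by (simp add: algebra_simps)
    also have "eqm M \<dots> ((ps2 * Q ^ 2) * Q ^ 2 + (ps2 * Up ^ 2) * Up ^ 2)"
      by (rule eqm_add[OF eqm_multR[OF h] eqm_multR[OF i]])
    also have "(ps2 * Q ^ 2) * Q ^ 2 + (ps2 * Up ^ 2) * Up ^ 2 = ps2 * (Q ^ 4 + Up ^ 4)"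
      by (simp add: algebra_simps power4_eq_xxxx power2_eq_square)
    finally show ?thesis .
  qed
  define A where "A = Abs_fps (\<lambda>i. (Q $ i - Up $ i) div 2)"
  have QA: "Q = Up + A + A"
  proof (rule fps_ext)
    fix i
    have "Q $ i = (-1) ^ (i div 2) * Up $ i" unfolding sgUp[symmetric] by simp
    hence ev2: "even (Q $ i - Up $ i)" by (cases "even (i div 2)") auto
    have Ai: "A $ i = (Q $ i - Up $ i) div 2" by (simp add: A_def)
    have "(Up + A + A) $ i = Up $ i + A $ i + A $ i" by (simp only: fps_add_nth)
    thus "Q $ i = (Up + A + A) $ i" unfolding Ai using ev2 by (auto elim!: evenE)
  qed
  define H where "H = A ^ 2 * (Up + A) ^ 2"
  have k: "Q ^ 4 + Up ^ 4 = 2 * V' + 16 * H"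
    unfolding V'_def H_def QA by (rule quart)
  define Z where "Z = ps2 * H * rinv V'"
  have l: "eqm M (FF + sg FF) (2 * ps2 + 16 * Z)"
  proof -
    have jk: "eqm M ((FF + sg FF) * V') (ps2 * (2 * V' + 16 * H))" using j unfolding k .
    have "eqm M ((FF + sg FF) * V' * rinv V') (ps2 * (2 * V' + 16 * H) * rinv V')"
      by (rule eqm_multR[OF jk])
    moreover have "(FF + sg FF) * V' * rinv V' = FF + sg FF"
      by (simp add: mult.assoc rinv_right[OF V'0])
    moreover have "ps2 * (2 * V' + 16 * H) * rinv V' = 2 * ps2 + 16 * Z"
    proof -
      have "ps2 * (2 * V' + 16 * H) * rinv V' = 2 * ps2 * (V' * rinv V') + 16 * Z"
        unfolding Z_def by (simp add: algebra_simps)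
      thus ?thesis by (simp add: rinv_right[OF V'0])
    qed
    ultimately show ?thesis by simp
  qed
  have lt: "4 * n < M" unfolding M_def p_def by simp
  have l2: "(FF + sg FF) $ (4 * n) = (2 * ps2 + 16 * Z) $ (4 * n)"
    using l lt unfolding eqm_def by blast
  have l3: "(FF + sg FF) $ (4 * n) = 2 * FF $ (4 * n)" by simp
  have l4: "(2 * ps2 + 16 * Z) $ (4 * n) = 2 * ps2 $ (4 * n) + 16 * Z $ (4 * n)"
    by (simp add: numeral_fps_const)
  have l5: "FF $ (4 * n) = ps2 $ (4 * n) + 8 * Z $ (4 * n)" using l2 l3 l4 by simp
  have l6: "FF $ (4 * n) = b (4 * n)"
    unfolding FF_def by (simp add: b_Gs[of "4 * n" N] N_def m_def p_def)
  have l7: "ps2 $ (4 * n) = (if (\<exists>k. k * k + k = 2 * n) then 1 else 0)"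
    unfolding ps2_def by (rule psi2_coeff) (simp add: N_def m_def p_def)
  show ?thesis
  proof (rule exI[of _ "Z $ (4 * n)"])
    show "b (4 * n) = (if (\<exists>k. k * k + k = 2 * n) then 1 else 0) + 8 * Z $ (4 * n)"
      using l5 unfolding l6 l7 .
  qed
qed



definition tri :: "nat \<Rightarrow> bool" where "tri n \<longleftrightarrow> (\<exists>k. k * k + k = 2 * n)"

lemma b_mod8: "[b (4 * n) = (if tri n then 1 else 0)] (mod 8)"
proof -
  obtain c where c: "b (4 * n) = (if tri n then 1 else 0) + 8 * c"
    using main_congr[of n] unfolding tri_def by blast
  show ?thesis unfolding c cong_def by simp
qed

lemma tri_iff: "tri m \<longleftrightarrow> (\<exists>s::nat. s * s = 8 * m + 1)"
proof
  assume "tri m"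
  then obtain k where k: "k * k + k = 2 * m" unfolding tri_def by blast
  have "(2 * k + 1) * (2 * k + 1) = 4 * (k * k + k) + 1" by (simp add: algebra_simps)
  hence "(2 * k + 1) * (2 * k + 1) = 8 * m + 1" using k by simp
  thus "\<exists>s::nat. s * s = 8 * m + 1" by blast
next
  assume "\<exists>s::nat. s * s = 8 * m + 1"
  then obtain s where s: "s * s = 8 * m + 1" by blast
  have "odd s"
  proof
    assume "even s"
    hence "even (s * s)" by simp
    thus False using s by simp
  qed
  then obtain k where k: "s = 2 * k + 1" by (elim oddE)
  have "(2 * k + 1) * (2 * k + 1) = 4 * (k * k + k) + 1" by (simp add: algebra_simps)
  hence "4 * (k * k + k) = 8 * m" using s k by simp
  hence "k * k + k = 2 * m" by simp
  thus "tri m" unfolding tri_def by blast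
qed

lemma part1:
  assumes p: "prime p" and leg: "Legendre (int (8 * l + 1)) (int p) = -1"
  shows "[b (4 * (p * n + l)) = 0] (mod 8)"
proof -
  have "\<not> tri (p * n + l)"
  proof
    assume "tri (p * n + l)"
    then obtain s where s: "s * s = 8 * (p * n + l) + 1" unfolding tri_iff by blast
    have "int s ^ 2 = int (8 * l + 1) + int p * int (8 * n)"
      using arg_cong[OF s, of int] by (simp add: algebra_simps power2_eq_square)
    hence "[int s ^ 2 = int (8 * l + 1)] (mod int p)"
      unfolding cong_def by simp
    hence "QuadRes (int p) (int (8 * l + 1))" unfolding QuadRes_def by blast
    thus False using leg unfolding Legendre_def by (auto split: if_splits)
  qed
  thus ?thesis using b_mod8[of "p * n + l"] by simp
qed

lemma odd_sq_mod8: "odd (q::nat) \<Longrightarrow> 8 dvd (q * q - 1)"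
proof -
  assume "odd q"
  then obtain t where t: "q = 2 * t + 1" by (elim oddE)
  have "q * q - 1 = 4 * (t * t + t)" unfolding t by (simp add: algebra_simps)
  moreover have "even (t * t + t)" by simp
  then obtain u where "t * t + t = 2 * u" by (elim evenE)
  ultimately have "q * q - 1 = 8 * u" by simp
  thus ?thesis by simp
qed

lemma part2:
  assumes p: "prime p" "odd p"
  shows "[b (4 * n) = b (4 * p ^ (2 * k + 2) * n + (p ^ (2 * k + 2) - 1) div 2)] (mod 8)"
proof -
  define q where "q = p ^ (k + 1)"
  have P: "p ^ (2 * k + 2) = q * q" unfolding q_def by (simp add: power_add[symmetric] mult_2[symmetric] algebra_simps)
  have oq: "odd q" unfolding q_def using p(2) by simp
  have q0: "0 < q" using oq by (cases q) auto
  obtain r where r: "q * q - 1 = 8 * r" using odd_sq_mod8[OF oq] by (elim dvdE)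
  have qq1: "1 \<le> q * q" using q0 by (simp add: Suc_le_eq)
  define n2 where "n2 = q * q * n + r"
  have idx: "4 * p ^ (2 * k + 2) * n + (p ^ (2 * k + 2) - 1) div 2 = 4 * n2"
    unfolding P n2_def r by simp
  have e: "8 * n2 + 1 = q * q * (8 * n + 1)"
  proof -
    have "8 * n2 + 1 = q * q * (8 * n) + (8 * r + 1)" unfolding n2_def by (simp add: algebra_simps)
    also have "8 * r + 1 = q * q" using le_add_diff_inverse2[OF qq1] unfolding r .
    finally show ?thesis by (simp add: algebra_simps)
  qed
  have tri_eq: "tri n2 \<longleftrightarrow> tri n"
  proof
    assume "tri n2"
    then obtain s where s: "s * s = 8 * n2 + 1" unfolding tri_iff by blast
    hence s2: "(q ^ 2) * (8 * n + 1) = s ^ 2" using e by (simp add: power2_eq_square)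
    hence "q ^ 2 dvd s ^ 2" by (metis dvd_triv_left)
    hence "q dvd s" by simp
    then obtain s' where s': "s = q * s'" by (elim dvdE)
    have "q ^ 2 * (8 * n + 1) = q ^ 2 * (s' * s')" using s2 s' by (simp add: power2_eq_square algebra_simps)
    moreover have qnz: "q ^ 2 \<noteq> 0" using q0 by simp
    ultimately have "8 * n + 1 = s' * s'" unfolding mult_left_cancel[OF qnz] by blast
    hence "s' * s' = 8 * n + 1" by simp
    thus "tri n" unfolding tri_iff by blast
  next
    assume "tri n"
    then obtain s where s: "s * s = 8 * n + 1" unfolding tri_iff by blast
    have "(q * s) * (q * s) = 8 * n2 + 1" unfolding e s[symmetric] by (simp add: algebra_simps)
    thus "tri n2" unfolding tri_iff by blast
  qed
  have c1: "[b (4 * n) = (if tri n then 1 else 0)] (mod 8)" by (rule b_mod8)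
  have c2: "[b (4 * n2) = (if tri n then 1 else 0)] (mod 8)" using b_mod8[of n2] tri_eq by simp
  show ?thesis unfolding idx using cong_trans[OF c1 cong_sym[OF c2]] .
qed

theorem theorem1p7:
  shows "(\<forall>(p::nat) (l::nat). prime p \<and> odd p \<and> 1 \<le> l \<and> l \<le> p - 1
            \<and> Legendre (int (8 * l + 1)) (int p) = -1
          \<longrightarrow> (\<forall>n::nat. [b (4 * (p * n + l)) = 0] (mod 8)))
       \<and> (\<forall>(p::nat) (n::nat) (k::nat). prime p \<and> odd p
          \<longrightarrow> [b (4 * n) = b (4 * p ^ (2 * k + 2) * n + (p ^ (2 * k + 2) - 1) div 2)] (mod 8))"
  using part1 part2 by blast



end
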